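(* Let $K\subseteq\mathbb{R}^n$ be a proper cone and let $A\in\mathbb{R}^{n\times n}$ be $K$-monotone. Let $A=U-V$ be a $K$-regular splitting and let $U=F-G$ be a $K$-weak regular splitting of type II such that $VF^{-1}G=GF^{-1}V$. Fix a positive integer $s$ and let $$T_{s}=(F^{-1}G)^{s}+\sum_{j=0}^{s-1}(F^{-1}G)^{j}F^{-1}V,\qquad \widehat{T}_{s}=(GF^{-1})^{s}+\sum_{j=0}^{s-1}(GF^{-1})^{j}VF^{-1}.$$ Then $T_s$ and $\widehat T_s$ induce the same splitting $A=B-C$, where $B=A(I-T_s)^{-1}$ and $C=B-A$ (so $T_s=B^{-1}C$); that is, $X:=(I-\widehat{T}_s)^{-1}A$ equals $B$, and with $Y:=X-A$ one has $\widehat T_s = YX^{-1}$. Further, $A=X-Y$ is the unique splitting of $A$ with $\widehat T_s=YX^{-1}$, and it is a $K$-weak regular splitting of type II.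
   Context: A proper cone $K\subseteq\mathbb{R}^n$ is a closed, convex, pointed, solid cone. For $M\in\mathbb{R}^{n\times n}$, $M\geq_K 0$ means $MK\subseteq K$. A matrix $A$ is $K$-monotone if $A$ is nonsingular and $A^{-1}\geq_K 0$. A splitting $A=U-V$ (with $U$ nonsingular) is $K$-regular if $U^{-1}\geq_K 0$ and $V\geq_K 0$; it is a $K$-weak regular splitting of type II if $U^{-1}\geq_K 0$ and $VU^{-1}\geq_K 0$. A splitting $A=X-Y$ is said to be induced by a matrix $T$ if $T=X^{-1}Y$ (respectively, for type II considerations, $T=YX^{-1}$). *)

theory Defs
  imports "HOL-Analysis.Analysis"
begin

definition proper_cone :: "(real ^ 'n) set \<Rightarrow> bool" where
  "proper_cone K \<longleftrightarrow> cone K \<and> closed K \<and> convex K \<and>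
     K \<inter> uminus ` K = {0} \<and> interior K \<noteq> {}"

definition K_nonneg :: "(real ^ 'n) set \<Rightarrow> real ^ 'n ^ 'n \<Rightarrow> bool" where
  "K_nonneg K M \<longleftrightarrow> (\<forall>x\<in>K. M *v x \<in> K)"

definition K_monotone :: "(real ^ 'n) set \<Rightarrow> real ^ 'n ^ 'n \<Rightarrow> bool" where
  "K_monotone K A \<longleftrightarrow> invertible A \<and> K_nonneg K (matrix_inv A)"

definition K_regular_splitting ::
  "(real ^ 'n) set \<Rightarrow> real ^ 'n ^ 'n \<Rightarrow> real ^ 'n ^ 'n \<Rightarrow> real ^ 'n ^ 'n \<Rightarrow> bool" where
  "K_regular_splitting K A U V \<longleftrightarrow> A = U - V \<and> invertible U \<and>
     K_nonneg K (matrix_inv U) \<and> K_nonneg K V"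

definition K_weak_regular_splitting_II ::
  "(real ^ 'n) set \<Rightarrow> real ^ 'n ^ 'n \<Rightarrow> real ^ 'n ^ 'n \<Rightarrow> real ^ 'n ^ 'n \<Rightarrow> bool" where
  "K_weak_regular_splitting_II K A U V \<longleftrightarrow> A = U - V \<and> invertible U \<and>
     K_nonneg K (matrix_inv U) \<and> K_nonneg K (V ** matrix_inv U)"

definition mpow :: "real ^ 'n ^ 'n \<Rightarrow> nat \<Rightarrow> real ^ 'n ^ 'n" where
  "mpow M k = ((\<lambda>X. M ** X) ^^ k) (mat 1)"

end

theory Submission imports Defs begin

lemma mm_sub_l: "(A::real^'n^'n) ** (B - C) = A ** B - A ** C"
  by (metis add_diff_cancel diff_add_cancel matrix_add_ldistrib)

lemma mm_add_r: "((A::real^'n^'n) + B) ** C = A ** C + B ** C"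
  by (vector matrix_matrix_mult_def sum.distrib[symmetric] field_simps)

lemma mm_sub_r: "((A::real^'n^'n) - B) ** C = A ** C - B ** C"
  by (metis add_diff_cancel diff_add_cancel mm_add_r)

lemma mm_sum_r: "(\<Sum>j\<in>S. (f j::real^'n^'n)) ** (C::real^'n^'n) = (\<Sum>j\<in>S. f j ** C)"
proof (cases "finite S")
  case True then show ?thesis by (induction S rule: finite_induct) (auto simp: mm_add_r)
qed simp

lemma mm_sum_l: "(C::real^'n^'n) ** (\<Sum>j\<in>S. (f j::real^'n^'n)) = (\<Sum>j\<in>S. C ** f j)"
proof (cases "finite S")
  case True then show ?thesis by (induction S rule: finite_induct) (auto simp: matrix_add_ldistrib)
qed simp

lemma mv_sum_r: "(\<Sum>j\<in>S. (f j::real^'n^'n)) *v (x::real^'n) = (\<Sum>j\<in>S. f j *v x)"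
proof (cases "finite S")
  case True then show ?thesis by (induction S rule: finite_induct) (auto simp: matrix_vector_mult_add_rdistrib)
qed simp

lemma minv: assumes "invertible (A::real^'n^'n)"
  shows "A ** matrix_inv A = mat 1" "matrix_inv A ** A = mat 1"
  using someI_ex[OF assms[unfolded invertible_def]] unfolding matrix_inv_def by auto

lemma minv_unique: assumes "(A::real^'n^'n) ** B = mat 1" shows "matrix_inv A = B"
proof -
  have "invertible A" using assms invertible_right_inverse by blast
  then have "matrix_inv A = matrix_inv A ** (A ** B)" using assms by simp
  also have "\<dots> = B" using minv(2)[OF \<open>invertible A\<close>] by (simp add: matrix_mul_assoc)
  finally show ?thesis .
qed

lemma minv_invertible: assumes "invertible (A::real^'n^'n)" shows "invertible (matrix_inv A)"
  using minv[OF assms] invertible_def by blast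

lemma mpow_0[simp]: "mpow M 0 = mat 1" by (simp add: mpow_def)
lemma mpow_Suc: "mpow M (Suc k) = M ** mpow M k" by (simp add: mpow_def)

lemma mpow_comm: assumes "(M::real^'n^'n) ** N = N ** P" shows "mpow M k ** N = N ** mpow P k"
proof (induction k)
  case 0 then show ?case by simp
next
  case (Suc k)
  have "mpow M (Suc k) ** N = M ** (mpow M k ** N)" by (simp add: mpow_Suc matrix_mul_assoc)
  also have "\<dots> = (M ** N) ** mpow P k" by (simp add: Suc matrix_mul_assoc)
  also have "\<dots> = N ** mpow P (Suc k)" by (simp add: assms mpow_Suc matrix_mul_assoc)
  finally show ?case .
qed

lemma mpow_add: "mpow (M::real^'n^'n) (a + b) = mpow M a ** mpow M b"
  by (induction a) (auto simp: mpow_Suc matrix_mul_assoc)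

lemma K_nonneg_id: "K_nonneg K (mat 1)" by (simp add: K_nonneg_def)
lemma K_nonneg_mult: "K_nonneg K M \<Longrightarrow> K_nonneg K N \<Longrightarrow> K_nonneg K (M ** N)"
  by (simp add: K_nonneg_def matrix_vector_mul_assoc[symmetric])
lemma K_nonneg_add: "\<forall>x\<in>K. \<forall>y\<in>K. x + y \<in> K \<Longrightarrow> K_nonneg K M \<Longrightarrow> K_nonneg K N \<Longrightarrow> K_nonneg K (M + N)"
  by (simp add: K_nonneg_def matrix_vector_mult_add_rdistrib)
lemma K_nonneg_mpow: "K_nonneg K M \<Longrightarrow> K_nonneg K (mpow M k)"
  by (induction k) (auto simp: K_nonneg_id mpow_Suc K_nonneg_mult)

lemma Ksum: assumes "0 \<in> K" "\<forall>x\<in>K. \<forall>y\<in>K. x + y \<in> K" "\<forall>i\<in>S. f i \<in> K"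
  shows "sum f S \<in> K"
proof (cases "finite S")
  case True then show ?thesis using assms(3) by (induction S rule: finite_induct) (auto simp: assms)
qed (simp add: assms)

lemma K_nonneg_sum: assumes "0 \<in> K" "\<forall>x\<in>K. \<forall>y\<in>K. x + y \<in> K" "\<forall>i\<in>S. K_nonneg K (f i)"
  shows "K_nonneg K (sum f S)"
  unfolding K_nonneg_def using assms by (auto simp: mv_sum_r K_nonneg_def intro!: Ksum)


lemma proper_cone_facts:
  assumes "proper_cone (K::(real^'n) set)"
  shows "0 \<in> K" "\<forall>x\<in>K. \<forall>y\<in>K. x + y \<in> K" "\<forall>x\<in>K. \<forall>c\<ge>0. c *\<^sub>R x \<in> K"
proof -
  have c: "cone K" "convex K" "interior K \<noteq> {}" using assms unfolding proper_cone_def by auto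
  then have "K \<noteq> {}" using interior_subset by blast
  then show "0 \<in> K" using cone_contains_0[OF c(1)] by blast
  show "\<forall>x\<in>K. \<forall>y\<in>K. x + y \<in> K" "\<forall>x\<in>K. \<forall>c\<ge>0. c *\<^sub>R x \<in> K"
    using convex_cone[of K] c by auto
qed

lemma pos_functional:
  assumes "proper_cone (K::(real^'n) set)"
  shows "\<exists>a b. b > 0 \<and> (\<forall>k\<in>K. b * norm k \<le> inner a k)"
proof -
  note kf = proper_cone_facts[OF assms]
  have cl: "closed K" and pt: "K \<inter> uminus ` K = {0}" using assms unfolding proper_cone_def by auto
  define C where "C = convex hull (K \<inter> sphere 0 1)"
  have "compact (K \<inter> sphere 0 1)" using cl by (simp add: closed_Int_compact)
  then have "compact C" unfolding C_def by (rule compact_convex_hull)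
  then have clC: "closed C" by (rule compact_imp_closed)
  have cvC: "convex C" unfolding C_def by simp
  have n0: "0 \<notin> C"
  proof
    assume "0 \<in> C"
    then obtain S u where S: "finite S" "S \<subseteq> K \<inter> sphere 0 1" "\<forall>x\<in>S. 0 \<le> u x" "sum u S = 1"
      "(\<Sum>v\<in>S. u v *\<^sub>R v) = 0"
      unfolding C_def convex_hull_explicit by blast
    have "\<exists>v0\<in>S. u v0 > 0"
    proof (rule ccontr)
      assume "\<not> ?thesis"
      then have "\<forall>v\<in>S. u v \<le> 0" by auto
      then have "sum u S \<le> 0" by (simp add: sum_nonpos)
      then show False using S(4) by simp
    qed
    then obtain v0 where v0: "v0 \<in> S" "u v0 > 0" by blast
    have rest: "(\<Sum>v\<in>S - {v0}. u v *\<^sub>R v) \<in> K"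
      using S(2,3) kf by (intro Ksum) auto
    have "0 = u v0 *\<^sub>R v0 + (\<Sum>v\<in>S - {v0}. u v *\<^sub>R v)"
      using S(5) sum.remove[OF S(1) v0(1), of "\<lambda>v. u v *\<^sub>R v"] by simp
    then have "- (u v0 *\<^sub>R v0) = (\<Sum>v\<in>S - {v0}. u v *\<^sub>R v)" by (rule minus_unique[OF sym])
    then have "- (u v0 *\<^sub>R v0) \<in> K" using rest by simp
    moreover have "1 / u v0 \<ge> 0" using v0(2) by simp
    ultimately have "(1 / u v0) *\<^sub>R (- (u v0 *\<^sub>R v0)) \<in> K" using kf(3) by blast
    moreover have "(1 / u v0) *\<^sub>R (- (u v0 *\<^sub>R v0)) = - v0" using v0(2) by simp
    ultimately have "- v0 \<in> K" by simp
    then have "v0 \<in> uminus ` K" by (metis image_eqI minus_minus)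
    moreover have "v0 \<in> K" "norm v0 = 1" using S(2) v0(1) by auto
    ultimately have "v0 \<in> K \<inter> uminus ` K" "norm v0 = 1" by auto
    then have "v0 = 0" "norm v0 = 1" using pt by blast+
    then show False by simp
  qed
  obtain a b where ab: "a \<noteq> 0" "0 < b" "\<forall>x\<in>C. inner a x > b"
    using separating_hyperplane_closed_0[OF cvC clC n0] by blast
  have "\<forall>k\<in>K. b * norm k \<le> inner a k"
  proof
    fix k assume k: "k \<in> K"
    show "b * norm k \<le> inner a k"
    proof (cases "k = 0")
      case False
      then have nk: "norm k > 0" by simp
      have "(1 / norm k) *\<^sub>R k \<in> K \<inter> sphere 0 1" using k kf(3) nk by auto
      then have "(1 / norm k) *\<^sub>R k \<in> C" unfolding C_def by (rule hull_inc)
      then have "inner a ((1 / norm k) *\<^sub>R k) > b" using ab by auto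
      then have "inner a k / norm k > b" by (simp add: inner_scaleR_right divide_inverse_commute)
      then show ?thesis using nk by (simp add: field_simps)
    qed simp
  qed
  then show ?thesis using ab(2) by blast
qed

lemma solid_decomp:
  assumes "proper_cone (K::(real^'n) set)"
  shows "\<exists>p q. p \<in> K \<and> q \<in> K \<and> x = p - q"
proof -
  note kf = proper_cone_facts[OF assms]
  obtain y0 where "y0 \<in> interior K" using assms unfolding proper_cone_def by auto
  then obtain e where e: "e > 0" "ball y0 e \<subseteq> K" using mem_interior by blast
  show ?thesis
  proof (cases "x = 0")
    case True then show ?thesis using kf(1) by auto
  next
    case False
    define d where "d = e / (2 * norm x)"
    have d: "d > 0" using e False by (simp add: d_def)
    have "dist y0 (y0 + d *\<^sub>R x) = e / 2" using False e d
      by (simp add: dist_norm d_def)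
    then have "y0 + d *\<^sub>R x \<in> K" "y0 \<in> K" using e by auto
    then have "(1/d) *\<^sub>R (y0 + d *\<^sub>R x) \<in> K" "(1/d) *\<^sub>R y0 \<in> K" using kf(3) d by auto
    moreover have "x = (1/d) *\<^sub>R (y0 + d *\<^sub>R x) - (1/d) *\<^sub>R y0" using d
      by (simp add: scaleR_add_right)
    ultimately show ?thesis by blast
  qed
qed


theorem theorem3p6:
  fixes K :: "(real ^ 'n) set" and A U V F G :: "real ^ 'n ^ 'n" and s :: nat
  assumes "proper_cone K"
    and "K_monotone K A"
    and "K_regular_splitting K A U V"
    and "K_weak_regular_splitting_II K U F G"
    and "V ** matrix_inv F ** G = G ** matrix_inv F ** V"
    and "s > 0"
  defines "T \<equiv> mpow (matrix_inv F ** G) s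
                + (\<Sum>j<s. mpow (matrix_inv F ** G) j ** matrix_inv F ** V)"
    and "Th \<equiv> mpow (G ** matrix_inv F) s
                + (\<Sum>j<s. mpow (G ** matrix_inv F) j ** V ** matrix_inv F)"
  defines "B \<equiv> A ** matrix_inv (mat 1 - T)"
    and "X \<equiv> matrix_inv (mat 1 - Th) ** A"
  shows "invertible (mat 1 - T) \<and> invertible (mat 1 - Th)
    \<and> invertible B \<and> T = matrix_inv B ** (B - A)
    \<and> X = B
    \<and> Th = (X - A) ** matrix_inv X
    \<and> (\<forall>X' Y'. invertible X' \<and> A = X' - Y' \<and> Th = Y' ** matrix_inv X'
           \<longrightarrow> X' = X \<and> Y' = X - A)
    \<and> K_weak_regular_splitting_II K A X (X - A)"
proof -
  note kf = proper_cone_facts[OF assms(1)]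
  from assms(3) have AUV: "A = U - V" and Uinv: "invertible U" and KUi: "K_nonneg K (matrix_inv U)"
    and KV: "K_nonneg K V" unfolding K_regular_splitting_def by auto
  from assms(4) have UFG: "U = F - G" and Finv: "invertible F" and KW: "K_nonneg K (matrix_inv F)"
    and KHh: "K_nonneg K (G ** matrix_inv F)" unfolding K_weak_regular_splitting_II_def by auto
  from assms(2) have Ainv: "invertible A" unfolding K_monotone_def by auto
  define W where "W = matrix_inv F"
  define Ui where "Ui = matrix_inv U"
  define Hh where "Hh = G ** W"
  define H where "H = W ** G"
  define P where "P = mpow Hh s"
  define Q where "Q = mpow H s"
  define S where "S = (\<Sum>j<s. mpow Hh j)"
  have KHh': "K_nonneg K Hh" using KHh by (simp add: Hh_def W_def)
  have KW': "K_nonneg K W" using KW by (simp add: W_def)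
  have KUi': "K_nonneg K Ui" using KUi by (simp add: Ui_def)
  have WF: "W ** F = mat 1" "F ** W = mat 1" using minv[OF Finv] W_def by auto
  have UU: "Ui ** U = mat 1" "U ** Ui = mat 1" using minv[OF Uinv] Ui_def by auto
  have Winv: "invertible W" using WF invertible_def by blast
  have Uiinv: "invertible Ui" using UU invertible_def by blast
  have key1: "Ui ** Hh + W = Ui"
  proof -
    have "Ui ** Hh + W = Ui ** G ** W + Ui ** U ** W" by (simp add: Hh_def UU matrix_mul_assoc)
    also have "\<dots> = Ui ** (G + U) ** W" by (simp add: matrix_add_ldistrib mm_add_r)
    also have "\<dots> = Ui" by (simp add: UFG WF matrix_mul_assoc[symmetric])
    finally show ?thesis .
  qed
  have sumid: "Ui ** mpow Hh m + W ** (\<Sum>j<m. mpow Hh j) = Ui" for m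
  proof (induction m)
    case 0 then show ?case by simp
  next
    case (Suc m)
    have "Ui ** mpow Hh (Suc m) + W ** (\<Sum>j<Suc m. mpow Hh j)
        = (Ui ** Hh + W) ** mpow Hh m + W ** (\<Sum>j<m. mpow Hh j)"
      by (simp add: mpow_Suc matrix_add_ldistrib mm_add_r matrix_mul_assoc)
    also have "\<dots> = Ui" using Suc by (simp add: key1)
    finally show ?case .
  qed
  have HW: "H ** W = W ** Hh" by (simp add: H_def Hh_def matrix_mul_assoc)
  have comm7: "mpow H j ** W = W ** mpow Hh j" for j using mpow_comm[OF HW] .
  have VH: "Hh ** V = V ** H" using assms(5) by (simp add: H_def Hh_def W_def matrix_mul_assoc)
  have comm8: "mpow Hh j ** V = V ** mpow H j" for j using mpow_comm[OF VH] .
  have HhU: "Hh ** U = U ** H"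
    by (simp add: Hh_def H_def UFG mm_sub_l mm_sub_r matrix_mul_assoc WF)
      (simp add: matrix_mul_assoc[symmetric] WF)
  have UQ: "P ** U = U ** Q" unfolding P_def Q_def using mpow_comm[OF HhU] .
  have WS: "W ** S = Ui - Ui ** P" using sumid[of s] unfolding S_def P_def by (simp add: algebra_simps)
  have UiP: "Ui ** P = Q ** Ui"
  proof -
    have "Ui ** P = Ui ** P ** U ** Ui" by (simp add: UU matrix_mul_assoc[symmetric])
    also have "\<dots> = Ui ** U ** Q ** Ui" by (simp add: UQ matrix_mul_assoc[symmetric])
    finally show ?thesis by (simp add: UU)
  qed
  have Teq: "T = Q + (Ui - Q ** Ui) ** V"
  proof -
    have T1: "T = mpow H s + (\<Sum>j<s. mpow H j ** W ** V)" unfolding T_def H_def W_def ..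
    have "(\<Sum>j<s. mpow H j ** W ** V) = (\<Sum>j<s. mpow H j ** W) ** V" by (simp add: mm_sum_r)
    also have "(\<Sum>j<s. mpow H j ** W) = W ** S" by (simp add: comm7 S_def mm_sum_l)
    finally show ?thesis using T1 WS UiP by (simp add: Q_def)
  qed
  have Theq: "Th = P + V ** (Ui - Ui ** P)"
  proof -
    have T1: "Th = mpow Hh s + (\<Sum>j<s. mpow Hh j ** V ** W)" unfolding Th_def Hh_def W_def ..
    have "(\<Sum>j<s. mpow Hh j ** V ** W) = (\<Sum>j<s. V ** (W ** mpow Hh j))"
      by (simp add: comm8 comm7[symmetric] matrix_mul_assoc)
    also have "\<dots> = V ** (W ** S)" by (simp add: S_def mm_sum_l)
    finally show ?thesis using T1 WS by (simp add: P_def)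
  qed
  have ImT: "mat 1 - T = (mat 1 - Q) ** Ui ** A"
  proof -
    have "(mat 1 - Q) ** Ui ** A = (mat 1 - Q) ** (Ui ** U - Ui ** V)"
      by (simp add: AUV mm_sub_l matrix_mul_assoc)
    also have "\<dots> = (mat 1 - Q) ** (mat 1 - Ui ** V)" by (simp add: UU)
    also have "\<dots> = mat 1 - Q - (Ui ** V - Q ** Ui ** V)" by (simp add: mm_sub_l mm_sub_r matrix_mul_assoc)
    finally show ?thesis using Teq by (simp add: mm_sub_r diff_diff_eq)
  qed
  have ImTh: "mat 1 - Th = A ** Ui ** (mat 1 - P)"
  proof -
    have "A ** Ui ** (mat 1 - P) = (U ** Ui - V ** Ui) ** (mat 1 - P)"
      by (simp add: AUV mm_sub_r)
    also have "\<dots> = (mat 1 - V ** Ui) ** (mat 1 - P)" by (simp add: UU)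
    also have "\<dots> = mat 1 - P - (V ** Ui - V ** Ui ** P)" by (simp add: mm_sub_l mm_sub_r matrix_mul_assoc)
    finally show ?thesis using Theq by (simp add: mm_sub_l matrix_mul_assoc diff_diff_eq)
  qed
  have invP: "invertible (mat 1 - P)"
  proof -
    obtain a b where ab: "b > 0" "\<forall>k\<in>K. b * norm k \<le> inner a k"
      using pos_functional[OF assms(1)] by blast
    have bound: "\<exists>M. \<forall>m. (\<Sum>j<m. norm (W *v (mpow Hh j *v p))) \<le> M" if p: "p \<in> K" for p
    proof -
      have "(\<Sum>j<m. norm (W *v (mpow Hh j *v p))) \<le> inner a (Ui *v p) / b" for m
      proof -
        have tK: "W *v (mpow Hh j *v p) \<in> K" for j
          using KW' K_nonneg_mpow[OF KHh'] p unfolding K_nonneg_def by blast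
        have e1: "b * (\<Sum>j<m. norm (W *v (mpow Hh j *v p))) = (\<Sum>j<m. b * norm (W *v (mpow Hh j *v p)))"
          by (simp add: sum_distrib_left)
        have e2: "(\<Sum>j<m. b * norm (W *v (mpow Hh j *v p))) \<le> (\<Sum>j<m. inner a (W *v (mpow Hh j *v p)))"
          using ab tK by (intro sum_mono) auto
        have e3: "(\<Sum>j<m. inner a (W *v (mpow Hh j *v p))) = inner a (\<Sum>j<m. W *v (mpow Hh j *v p))"
          by (simp add: inner_sum_right)
        have e4: "(\<Sum>j<m. W *v (mpow Hh j *v p)) = (W ** (\<Sum>j<m. mpow Hh j)) *v p"
          by (simp add: mm_sum_l mv_sum_r matrix_vector_mul_assoc)
        have e5: "W ** (\<Sum>j<m. mpow Hh j) = Ui - Ui ** mpow Hh m" using sumid[of m] by (simp add: algebra_simps)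
        have e6: "inner a ((Ui - Ui ** mpow Hh m) *v p) = inner a (Ui *v p) - inner a ((Ui ** mpow Hh m) *v p)"
          by (simp add: matrix_vector_mult_diff_rdistrib inner_diff_right)
        have "(Ui ** mpow Hh m) *v p \<in> K"
          using K_nonneg_mult[OF KUi' K_nonneg_mpow[OF KHh']] p unfolding K_nonneg_def by blast
        then have "b * norm ((Ui ** mpow Hh m) *v p) \<le> inner a ((Ui ** mpow Hh m) *v p)" using ab by blast
        moreover have "0 \<le> b * norm ((Ui ** mpow Hh m) *v p)" using ab by simp
        ultimately have e7: "0 \<le> inner a ((Ui ** mpow Hh m) *v p)" by linarith
        have "b * (\<Sum>j<m. norm (W *v (mpow Hh j *v p))) \<le> inner a (Ui *v p)"
          using e1 e2 e3 e4 e5 e6 e7 by simp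
        then show ?thesis using ab(1) by (simp add: field_simps)
      qed
      then show ?thesis by blast
    qed
    have ker: "\<forall>x. (mat 1 - P) *v x = 0 \<longrightarrow> x = 0"
    proof (intro allI impI)
      fix x assume "(mat 1 - P) *v x = 0"
      then have Px: "mpow Hh s *v x = x" by (simp add: matrix_vector_mult_diff_rdistrib P_def)
      have per: "mpow Hh (k * s) *v x = x" for k
      proof (induction k)
        case 0 then show ?case by simp
      next
        case (Suc k)
        have "mpow Hh (Suc k * s) = mpow Hh s ** mpow Hh (k * s)" by (simp add: mpow_add[symmetric])
        then show ?case using Suc Px by (simp add: matrix_vector_mul_assoc[symmetric])
      qed
      obtain p q where pq: "p \<in> K" "q \<in> K" "x = p - q" using solid_decomp[OF assms(1)] by blast
      obtain Mp where Mp: "\<forall>m. (\<Sum>j<m. norm (W *v (mpow Hh j *v p))) \<le> Mp" using bound[OF pq(1)] by blast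
      obtain Mq where Mq: "\<forall>m. (\<Sum>j<m. norm (W *v (mpow Hh j *v q))) \<le> Mq" using bound[OF pq(2)] by blast
      define f where "f j = norm (W *v (mpow Hh j *v x))" for j
      have fle: "f j \<le> norm (W *v (mpow Hh j *v p)) + norm (W *v (mpow Hh j *v q))" for j
        unfolding f_def pq(3) by (simp add: matrix_vector_mult_diff_distrib norm_triangle_ineq4)
      have sumf: "(\<Sum>j<m. f j) \<le> Mp + Mq" for m
      proof -
        have "(\<Sum>j<m. f j) \<le> (\<Sum>j<m. norm (W *v (mpow Hh j *v p))) + (\<Sum>j<m. norm (W *v (mpow Hh j *v q)))"
          using fle by (simp add: sum.distrib[symmetric] sum_mono)
        then show ?thesis using Mp Mq by (smt (verit))
      qed
      define c where "c = norm (W *v x)"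
      have lowb: "real m * c \<le> (\<Sum>j<m * s. f j)" for m
      proof -
        have inj: "inj_on (\<lambda>k. k * s) {..<m}" using assms(6) by (auto simp: inj_on_def)
        have "(\<Sum>k<m. f (k * s)) = sum f ((\<lambda>k. k * s) ` {..<m})"
          by (simp add: sum.reindex[OF inj])
        also have "\<dots> \<le> (\<Sum>j<m * s. f j)"
          using assms(6) by (intro sum_mono2) (auto simp: f_def)
        finally have "(\<Sum>k<m. f (k * s)) \<le> (\<Sum>j<m * s. f j)" .
        moreover have "(\<Sum>k<m. f (k * s)) = real m * c" by (simp add: f_def per c_def)
        ultimately show ?thesis by simp
      qed
      have "c = 0"
      proof (rule ccontr)
        assume "c \<noteq> 0"
        then have cpos: "c > 0" unfolding c_def by simp
        obtain m where m: "(Mp + Mq) / c < real m" using reals_Archimedean2 by blast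
        then have "Mp + Mq < real m * c" using cpos by (simp add: field_simps)
        moreover have "real m * c \<le> Mp + Mq" using lowb[of m] sumf[of "m * s"] by simp
        ultimately show False by simp
      qed
      then have "W *v x = 0" unfolding c_def by simp
      then have "F *v (W *v x) = 0" by simp
      then show "x = 0" by (simp add: matrix_vector_mul_assoc WF)
    qed
    then obtain Bl where "Bl ** (mat 1 - P) = mat 1" using matrix_left_invertible_ker by blast
    then show ?thesis using invertible_left_inverse by blast
  qed
  have QWP: "Q = W ** P ** F"
  proof -
    have "Q = Q ** (W ** F)" by (simp add: WF)
    also have "\<dots> = W ** P ** F" using comm7[of s] by (simp add: matrix_mul_assoc Q_def P_def)
    finally show ?thesis .
  qed
  have ImQ: "mat 1 - Q = W ** (mat 1 - P) ** F"
    by (simp add: QWP mm_sub_l mm_sub_r WF)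
  have invQ: "invertible (mat 1 - Q)" unfolding ImQ
    by (intro invertible_mult Winv invP Finv)
  have invT: "invertible (mat 1 - T)" unfolding ImT
    by (intro invertible_mult invQ Uiinv Ainv)
  have invTh: "invertible (mat 1 - Th)" unfolding ImTh
    by (intro invertible_mult invP Uiinv Ainv)
  define R where "R = matrix_inv (mat 1 - P)"
  define Qi where "Qi = matrix_inv (mat 1 - Q)"
  define Ai where "Ai = matrix_inv A"
  have RR: "(mat 1 - P) ** R = mat 1" "R ** (mat 1 - P) = mat 1" using minv[OF invP] R_def by auto
  have QQ: "(mat 1 - Q) ** Qi = mat 1" "Qi ** (mat 1 - Q) = mat 1" using minv[OF invQ] Qi_def by auto
  have AA: "A ** Ai = mat 1" "Ai ** A = mat 1" using minv[OF Ainv] Ai_def by auto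
  have invImT: "matrix_inv (mat 1 - T) = Ai ** U ** Qi"
  proof (rule minv_unique)
    have "(mat 1 - T) ** (Ai ** U ** Qi) = (mat 1 - Q) ** Ui ** (A ** Ai) ** U ** Qi"
      unfolding ImT by (simp add: matrix_mul_assoc)
    also have "\<dots> = (mat 1 - Q) ** (Ui ** U) ** Qi" by (simp add: AA matrix_mul_assoc)
    also have "\<dots> = mat 1" by (simp add: UU QQ)
    finally show "(mat 1 - T) ** (Ai ** U ** Qi) = mat 1" .
  qed
  have invImTh: "matrix_inv (mat 1 - Th) = R ** U ** Ai"
  proof (rule minv_unique)
    have "(mat 1 - Th) ** (R ** U ** Ai) = A ** Ui ** ((mat 1 - P) ** R) ** U ** Ai"
      unfolding ImTh by (simp add: matrix_mul_assoc)
    also have "\<dots> = A ** (Ui ** U) ** Ai" by (simp add: RR matrix_mul_assoc)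
    also have "\<dots> = mat 1" by (simp add: UU AA)
    finally show "(mat 1 - Th) ** (R ** U ** Ai) = mat 1" .
  qed
  have Bf: "B = U ** Qi" unfolding B_def invImT by (simp add: matrix_mul_assoc AA)
  have Xf: "X = R ** U" unfolding X_def invImTh by (simp add: matrix_mul_assoc[symmetric] AA)
  have XB: "X = B"
  proof -
    have "R ** U = R ** U ** ((mat 1 - Q) ** Qi)" by (simp add: QQ)
    also have "\<dots> = R ** (U ** (mat 1 - Q)) ** Qi" by (simp add: matrix_mul_assoc)
    also have "U ** (mat 1 - Q) = (mat 1 - P) ** U" by (simp add: mm_sub_l mm_sub_r UQ)
    also have "R ** ((mat 1 - P) ** U) ** Qi = U ** Qi" by (simp add: matrix_mul_assoc RR)
    finally show ?thesis using Xf Bf by simp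
  qed
  have invB: "invertible B" unfolding Bf by (intro invertible_mult Uinv minv_invertible[OF invQ, folded Qi_def])
  have Binv: "matrix_inv B = (mat 1 - Q) ** Ui"
  proof -
    have "B ** ((mat 1 - Q) ** Ui) = U ** (Qi ** (mat 1 - Q)) ** Ui" unfolding Bf by (simp add: matrix_mul_assoc)
    also have "\<dots> = mat 1" by (simp add: QQ UU)
    finally show ?thesis by (rule minv_unique)
  qed
  have Teq2: "T = matrix_inv B ** (B - A)"
  proof -
    have "matrix_inv B ** (B - A) = (mat 1 - Q) ** (Ui ** U) ** Qi - (mat 1 - T)"
      unfolding Binv unfolding mm_sub_l ImT Bf by (simp add: matrix_mul_assoc)
    also have "\<dots> = T" by (simp add: UU QQ)
    finally show ?thesis by simp
  qed
  have Xinv: "matrix_inv X = Ui ** (mat 1 - P)"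
  proof -
    have "X ** (Ui ** (mat 1 - P)) = R ** (U ** Ui) ** (mat 1 - P)" unfolding Xf by (simp add: matrix_mul_assoc)
    also have "\<dots> = mat 1" by (simp add: UU RR)
    finally show ?thesis by (rule minv_unique)
  qed
  have Theq2: "Th = (X - A) ** matrix_inv X"
  proof -
    have "(X - A) ** matrix_inv X = R ** (U ** Ui) ** (mat 1 - P) - (mat 1 - Th)"
      unfolding Xinv unfolding mm_sub_r ImTh Xf by (simp add: matrix_mul_assoc)
    also have "\<dots> = Th" by (simp add: UU RR)
    finally show ?thesis by simp
  qed
  have uniq: "\<forall>X' Y'. invertible X' \<and> A = X' - Y' \<and> Th = Y' ** matrix_inv X'
           \<longrightarrow> X' = X \<and> Y' = X - A"
  proof (intro allI impI)
    fix X' Y' assume h: "invertible X' \<and> A = X' - Y' \<and> Th = Y' ** matrix_inv X'"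
    then have Y': "Y' = X' - A" by simp
    have XX: "X' ** matrix_inv X' = mat 1" "matrix_inv X' ** X' = mat 1" using minv h by auto
    have "Th = mat 1 - A ** matrix_inv X'" using h XX by (simp add: Y' mm_sub_r)
    then have "mat 1 - Th = A ** matrix_inv X'" by simp
    then have "(mat 1 - Th) ** X' = A" by (simp add: matrix_mul_assoc[symmetric] XX)
    then have "matrix_inv (mat 1 - Th) ** ((mat 1 - Th) ** X') = X" unfolding X_def by simp
    then have "X' = X" using minv(2)[OF invTh] by (simp add: matrix_mul_assoc)
    then show "X' = X \<and> Y' = X - A" using Y' by simp
  qed
  have invX: "invertible X" unfolding Xf by (intro invertible_mult Uinv minv_invertible[OF invP, folded R_def])
  have KS: "K_nonneg K S" unfolding S_def using kf
    by (intro K_nonneg_sum) (auto intro!: K_nonneg_mpow KHh')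
  have KXi: "K_nonneg K (matrix_inv X)" unfolding Xinv
    using WS KS KW' K_nonneg_mult by (metis mm_sub_l matrix_mul_rid)
  have KTh: "K_nonneg K Th"
  proof -
    have "Th = mpow Hh s + (\<Sum>j<s. mpow Hh j ** V ** W)" unfolding Th_def Hh_def W_def ..
    moreover have "K_nonneg K (\<Sum>j<s. mpow Hh j ** V ** W)" using kf
      by (intro K_nonneg_sum) (auto intro!: K_nonneg_mult K_nonneg_mpow KHh' KV KW')
    ultimately show ?thesis using kf by (auto intro!: K_nonneg_add K_nonneg_mpow KHh')
  qed
  have weak: "K_weak_regular_splitting_II K A X (X - A)"
    unfolding K_weak_regular_splitting_II_def using invX KXi KTh Theq2 by simp
  show ?thesis using invT invTh invB Teq2 XB Theq2 uniq weak by blast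
qed
end
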